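(* There exists an I$^2$-GNN (a choice of $K$, $T$, $M_t$, $U_t$) such that for every graph $G=(V,E)$, every $i\in V$, every $j\in N(i)$ and every $k\in V_i$, $h^{(T)}_{i,j,k}$ equals the number of $4$-paths of the form $(i\to j\to\cdots\to k)$, i.e. the number of node sequences $i=v_1,\,v_2=j,\,v_3,\,v_4,\,v_5=k$ of pairwise distinct nodes with $(v_s,v_{s+1})\in E$ for $s=1,\dots,4$.
   Context: Graphs are finite, simple, undirected, $G=(V,E)$, possibly carrying node attributes $x_v$ and edge attributes $e_{u,v}$ (a fixed constant when absent); $N(v)$ is the neighbour set of $v$. I$^2$-GNN message passing: specified by an integer $K\ge1$, $T$, and arbitrary functions $M_t$ (values in some $\mathbb R^{d_t}$), $U_t$. For each root $i\in V$, $(V_i,E_i)$ is the subgraph of $G$ induced by nodes at shortest-path distance at most $K$ from $i$, and $N_i(k)=\{l\in V_i:(k,l)\in E_i\}$. For each $j\in N(i)$ and $k\in V_i$: $h^{(0)}_{i,j,k}=x_k\oplus\mathbb 1_{k=i}\oplus\mathbb 1_{k=j}$ ($\oplus$ = concatenation), and $h^{(t+1)}_{i,j,k}=U_t\big(h^{(t)}_{i,j,k},\sum_{l\in N_i(k)}M_t(h^{(t)}_{i,j,k},h^{(t)}_{i,j,l},e_{k,l})\big)$. *)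

theory Defs
  imports Complex_Main
begin

definition simple_graph :: "nat set \<Rightarrow> (nat \<times> nat) set \<Rightarrow> bool" where
  "simple_graph V E \<longleftrightarrow> finite V \<and> E \<subseteq> V \<times> V \<and> sym E \<and> irrefl E"

definition nbrs :: "(nat \<times> nat) set \<Rightarrow> nat \<Rightarrow> nat set" where
  "nbrs E v = {u. (v, u) \<in> E}"

definition khop :: "nat set \<Rightarrow> (nat \<times> nat) set \<Rightarrow> nat \<Rightarrow> nat \<Rightarrow> nat set" where
  "khop V E K i = {k \<in> V. \<exists>n\<le>K. (i, k) \<in> E ^^ n}"

definition sub_nbrs :: "nat set \<Rightarrow> (nat \<times> nat) set \<Rightarrow> nat \<Rightarrow> nat \<Rightarrow> nat \<Rightarrow> nat set" where
  "sub_nbrs V E K i k = {l \<in> khop V E K i. (k, l) \<in> E \<and> k \<in> khop V E K i}"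

text \<open>I^2-GNN hidden states h^(t)_{i,j,k}. M t takes values in R^(d t) (lists of length d t);
  the aggregated message is the componentwise sum over N_i(k).\<close>
primrec i2gnn ::
  "nat \<Rightarrow> (nat \<Rightarrow> nat) \<Rightarrow> (nat \<Rightarrow> real list \<Rightarrow> real list \<Rightarrow> 'e \<Rightarrow> real list)
   \<Rightarrow> (nat \<Rightarrow> real list \<Rightarrow> real list \<Rightarrow> real list)
   \<Rightarrow> nat set \<Rightarrow> (nat \<times> nat) set \<Rightarrow> (nat \<Rightarrow> real list) \<Rightarrow> (nat \<Rightarrow> nat \<Rightarrow> 'e)
   \<Rightarrow> nat \<Rightarrow> nat \<Rightarrow> nat \<Rightarrow> nat \<Rightarrow> real list" where
  "i2gnn K d M U V E x e i j 0 k = x k @ [of_bool (k = i), of_bool (k = j)]"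
| "i2gnn K d M U V E x e i j (Suc t) k =
     U t (i2gnn K d M U V E x e i j t k)
       (map (\<lambda>c. \<Sum>l\<in>sub_nbrs V E K i k.
                  M t (i2gnn K d M U V E x e i j t k) (i2gnn K d M U V E x e i j t l) (e k l) ! c)
            [0..<d t])"

definition num_4paths :: "(nat \<times> nat) set \<Rightarrow> nat \<Rightarrow> nat \<Rightarrow> nat \<Rightarrow> nat" where
  "num_4paths E i j k = card {p :: nat list. length p = 5 \<and> distinct p \<and>
     p ! 0 = i \<and> p ! 1 = j \<and> p ! 4 = k \<and> (\<forall>s<4. (p ! s, p ! Suc s) \<in> E)}"

end

theory Submission
  imports Defs
begin

definition dd :: "nat \<Rightarrow> nat" where "dd t = (if t = 0 then 3 else 1)"

definition MM :: "nat \<Rightarrow> real list \<Rightarrow> real list \<Rightarrow> 'e \<Rightarrow> real list" where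
  "MM t a b w = (if t = 0 then [b ! (length b - 2), b ! (length b - 1), 1]
                 else if t = 1 then [b ! 5] else [b ! 6])"

definition UU :: "nat \<Rightarrow> real list \<Rightarrow> real list \<Rightarrow> real list" where
  "UU t h m = (if t = 0 then [h ! (length h - 2), h ! (length h - 1), m ! 0, m ! 1, m ! 2,
                              m ! 1 * (1 - h ! (length h - 2))]
               else if t = 1 then h @ [m ! 0 * (1 - h ! 0) * (1 - h ! 1)]
               else [(1 - h ! 0) * (1 - h ! 1) * (m ! 0 - h ! 5 * (h ! 4 - h ! 2 - h ! 3))])"

lemma len_MM: "length (MM t a b w) = dd t"
  by (simp add: MM_def dd_def)

abbreviation "G K V E x e i j t v \<equiv> i2gnn K dd MM UU V E x e i j t v"

lemma h1: "G K V E x e i j (Suc 0) v =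
  [of_bool (v = i), of_bool (v = j),
   (\<Sum>l\<in>sub_nbrs V E K i v. of_bool (l = i)), (\<Sum>l\<in>sub_nbrs V E K i v. of_bool (l = j)),
   real (card (sub_nbrs V E K i v)),
   (\<Sum>l\<in>sub_nbrs V E K i v. of_bool (l = j)) * (1 - of_bool (v = i))]"
  by (simp add: UU_def MM_def dd_def nth_append upt_rec)

lemma h1n: "G K V E x e i j 1 v = G K V E x e i j (Suc 0) v" by (simp only: One_nat_def)

lemma h2: "G K V E x e i j 2 v = G K V E x e i j 1 v @
   [(\<Sum>l\<in>sub_nbrs V E K i v. G K V E x e i j 1 l ! 5) * (1 - of_bool (v = i)) * (1 - of_bool (v = j))]"
proof -
  have "G K V E x e i j (Suc 1) v = G K V E x e i j 1 v @
   [(\<Sum>l\<in>sub_nbrs V E K i v. G K V E x e i j 1 l ! 5) * (1 - of_bool (v = i)) * (1 - of_bool (v = j))]"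
    apply (simp only: i2gnn.simps(2))
    apply (simp add: UU_def MM_def dd_def h1 h1n nth_append del: i2gnn.simps)
    done
  then show ?thesis unfolding Suc_1 .
qed

lemma h3: "G K V E x e i j 3 v =
   [(1 - of_bool (v = i)) * (1 - of_bool (v = j)) *
     ((\<Sum>l\<in>sub_nbrs V E K i v. G K V E x e i j 2 l ! 6) - G K V E x e i j 1 v ! 5 *
        (real (card (sub_nbrs V E K i v)) - (\<Sum>l\<in>sub_nbrs V E K i v. of_bool (l = i))
          - (\<Sum>l\<in>sub_nbrs V E K i v. of_bool (l = j))))]"
proof -
  have 3: "(3::nat) = Suc 2" by simp
  have "G K V E x e i j (Suc 2) v = [(1 - of_bool (v = i)) * (1 - of_bool (v = j)) *
     ((\<Sum>l\<in>sub_nbrs V E K i v. G K V E x e i j 2 l ! 6) - G K V E x e i j 1 v ! 5 *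
        (real (card (sub_nbrs V E K i v)) - (\<Sum>l\<in>sub_nbrs V E K i v. of_bool (l = i))
          - (\<Sum>l\<in>sub_nbrs V E K i v. of_bool (l = j))))]"
    apply (simp only: i2gnn.simps(2))
    apply (simp add: UU_def MM_def dd_def h2 h1 h1n nth_append del: i2gnn.simps)
    done
  then show ?thesis unfolding 3 .
qed


declare i2gnn.simps[simp del]

lemma all4: "(\<forall>s<4. P (s::nat)) = (P 0 \<and> P 1 \<and> P 2 \<and> P 3)"
  by (auto simp: less_Suc_eq numeral_eq_Suc)

lemma len5: "length p = 5 \<Longrightarrow> \<exists>a b c d f. p = [a,b,c,d,f]"
  by (auto simp add: numeral_eq_Suc length_Suc_conv)

lemma sind: "finite S \<Longrightarrow> (\<Sum>l\<in>S. of_bool (l = a) :: real) = of_bool (a \<in> S)"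
  by (cases "a \<in> S") (auto simp: sum.delta' of_bool_def)

lemma main:
  fixes x :: "nat \<Rightarrow> real list" and e :: "nat \<Rightarrow> nat \<Rightarrow> 'e"
  assumes sg: "simple_graph V E" and iV: "i \<in> V" and ij: "(i,j) \<in> E" and kV: "k \<in> khop V E 4 i"
  shows "G 4 V E x e i j 3 k = [real (num_4paths E i j k)]"
proof -
  have finV: "finite V" and EV: "E \<subseteq> V \<times> V" and symE: "sym E" and irr: "irrefl E"
    using sg by (auto simp: simple_graph_def)
  have sy: "(b,a)\<in>E" if "(a,b)\<in>E" for a b using symE that by (auto simp: sym_def)
  have ir: "(a,a)\<notin>E" for a using irr by (auto simp: irrefl_def)
  have inV: "b \<in> V" if "(a,b)\<in>E" for a b using EV that by auto
  let ?Vi = "khop V E 4 i"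
  let ?N = "sub_nbrs V E 4 i"
  have inVi: "v \<in> ?Vi" if "v\<in>V" "(i,v)\<in>E^^n" "n\<le>4" for v n
    unfolding khop_def using that by auto
  have r1: "(i,j) \<in> E^^1" using ij by simp
  have r2: "(i,a) \<in> E^^2" if "(j,a)\<in>E" for a
    using relpow_Suc_I[OF r1 that] by (simp add: numeral_2_eq_2)
  have r3: "(i,l) \<in> E^^3" if "(j,a)\<in>E" "(a,l)\<in>E" for a l
    using relpow_Suc_I[OF r2[OF that(1)] that(2)] by (simp add: numeral_3_eq_3 numeral_2_eq_2)
  have Nmem: "l \<in> ?N v \<longleftrightarrow> l \<in> ?Vi \<and> (v,l)\<in>E \<and> v \<in> ?Vi" for l v
    by (simp add: sub_nbrs_def)
  have finN: "finite (?N v)" for v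
    by (rule finite_subset[OF _ finV]) (auto simp: sub_nbrs_def khop_def)
  have iVi: "i \<in> ?Vi" using inVi[OF iV, of 0] by simp
  have jVi: "j \<in> ?Vi" using inVi[OF inV[OF ij] r1] by simp
  have P3: "G 4 V E x e i j (Suc 0) l ! 5 = of_bool ((l,j)\<in>E \<and> l\<noteq>i)" if "l\<in>?Vi" for l
    using that by (simp add: h1n h1 sind finN Nmem jVi)
  define C where "C l a \<longleftrightarrow> (a,j)\<in>E \<and> a\<noteq>i \<and> l\<noteq>i \<and> l\<noteq>j" for l a
  have P4: "G 4 V E x e i j 2 l ! 6 = (\<Sum>a\<in>?N l. of_bool (C l a))" if "l\<in>?Vi" for l
  proof -
    have "G 4 V E x e i j 2 l ! 6 = (\<Sum>a\<in>?N l. G 4 V E x e i j 1 a ! 5) * (1 - of_bool (l=i)) * (1 - of_bool (l=j))"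
      by (simp add: h2 nth_append h1n h1)
    also have "(\<Sum>a\<in>?N l. G 4 V E x e i j 1 a ! 5) = (\<Sum>a\<in>?N l. of_bool((a,j)\<in>E \<and> a\<noteq>i))"
      by (rule sum.cong) (auto simp: P3 Nmem h1n)
    finally show ?thesis by (cases "l=i"; cases "l=j") (auto simp: C_def)
  qed
  define A where "A = Sigma (?N k) (\<lambda>l. {a\<in>?N l. C l a})"
  have finA: "finite A" unfolding A_def using finN by auto
  have SA: "(\<Sum>l\<in>?N k. G 4 V E x e i j 2 l ! 6) = real (card A)"
  proof -
    have "(\<Sum>l\<in>?N k. G 4 V E x e i j 2 l ! 6) = (\<Sum>l\<in>?N k. real (card {a\<in>?N l. C l a}))"
    proof (rule sum.cong)
      fix l assume "l \<in> ?N k"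
      then have "l \<in> ?Vi" by (simp add: Nmem)
      then have "G 4 V E x e i j 2 l ! 6 = (\<Sum>a\<in>?N l. of_bool (C l a))" by (rule P4)
      also have "\<dots> = real (card (?N l \<inter> {a. C l a}))" by (simp add: sum_of_bool_eq finN)
      also have "?N l \<inter> {a. C l a} = {a\<in>?N l. C l a}" by auto
      finally show "G 4 V E x e i j 2 l ! 6 = real (card {a\<in>?N l. C l a})" .
    qed simp
    also have "\<dots> = real (\<Sum>l\<in>?N k. card {a\<in>?N l. C l a})" by simp
    also have "(\<Sum>l\<in>?N k. card {a\<in>?N l. C l a}) = card A"
      unfolding A_def by (rule card_SigmaI[symmetric]) (auto simp: finN)
    finally show ?thesis .
  qed
  define P where "P = {p :: nat list. length p = 5 \<and> distinct p \<and>
     p ! 0 = i \<and> p ! 1 = j \<and> p ! 4 = k \<and> (\<forall>s<4. (p ! s, p ! Suc s) \<in> E)}"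
  have numP: "num_4paths E i j k = card P" unfolding P_def num_4paths_def ..
  have Pchar: "p \<in> P \<longleftrightarrow> (\<exists>a l. p = [i,j,a,l,k] \<and> distinct [i,j,a,l,k] \<and> (j,a)\<in>E \<and> (a,l)\<in>E \<and> (l,k)\<in>E)" for p
  proof
    assume "p \<in> P"
    then obtain a0 a1 a2 a3 a4 where p: "p = [a0,a1,a2,a3,a4]" using len5 unfolding P_def by blast
    from \<open>p \<in> P\<close> show "\<exists>a l. p = [i,j,a,l,k] \<and> distinct [i,j,a,l,k] \<and> (j,a)\<in>E \<and> (a,l)\<in>E \<and> (l,k)\<in>E"
      unfolding P_def p all4 by (auto simp add: numeral_eq_Suc)
  next
    assume "\<exists>a l. p = [i,j,a,l,k] \<and> distinct [i,j,a,l,k] \<and> (j,a)\<in>E \<and> (a,l)\<in>E \<and> (l,k)\<in>E"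
    then show "p \<in> P" unfolding P_def all4 using ij by (auto simp: numeral_eq_Suc)
  qed
  show ?thesis
  proof (cases "k = i \<or> k = j")
    case True
    then have "P = {}" by (auto simp: Pchar)
    then show ?thesis using True by (auto simp: h3 numP)
  next
    case False
    then have ki: "k \<noteq> i" and kj: "k \<noteq> j" by auto
    have ijne: "i \<noteq> j" using ij ir by auto
    define B where "B = {q\<in>A. snd q = k}"
    define f where "f = (\<lambda>(l::nat,a::nat). [i,j,a,l,k])"
    have BA: "B \<subseteq> A" unfolding B_def by auto
    have finB: "finite B" using finA BA finite_subset by blast
    have injf: "inj_on f (A - B)" unfolding f_def inj_on_def by auto
    have PfAB: "P = f ` (A - B)"
    proof
      show "P \<subseteq> f ` (A - B)"
      proof
        fix p assume "p \<in> P"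
        then obtain a l where p: "p = [i,j,a,l,k]" and d: "distinct [i,j,a,l,k]"
          and e1: "(j,a)\<in>E" and e2: "(a,l)\<in>E" and e3: "(l,k)\<in>E" by (auto simp: Pchar)
        have aVi: "a \<in> ?Vi" using inVi[OF inV[OF e1] r2[OF e1]] by simp
        have lVi: "l \<in> ?Vi" using inVi[OF inV[OF e2] r3[OF e1 e2]] by simp
        have "(l,a) \<in> A - B" unfolding A_def B_def C_def using d aVi lVi kV e1 e2 e3
          by (auto simp: Nmem intro: sy)
        then show "p \<in> f ` (A - B)" unfolding p f_def by force
      qed
    next
      show "f ` (A - B) \<subseteq> P"
      proof
        fix p assume "p \<in> f ` (A - B)"
        then obtain l a where la: "(l,a) \<in> A - B" and p: "p = [i,j,a,l,k]" unfolding f_def by auto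
        then have "l \<in> ?N k" "a \<in> ?N l" "C l a" "a \<noteq> k" unfolding A_def B_def by auto
        then show "p \<in> P" unfolding Pchar p C_def using ki kj ijne ir
          by (auto simp: Nmem intro: sy)
      qed
    qed
    have cP: "real (card P) = real (card A) - real (card B)"
    proof -
      have "card P = card (A - B)" using PfAB injf card_image by blast
      also have "\<dots> = card A - card B" using card_Diff_subset[OF finB BA] .
      finally show ?thesis using card_mono[OF finA BA] by (simp add: of_nat_diff)
    qed
    have N2: "?N k - {i,j} = (?N k - {i}) - {j}" by auto
    have cB: "real (card B) = of_bool ((k,j)\<in>E) * (real (card (?N k)) - of_bool (i \<in> ?N k) - of_bool (j \<in> ?N k))"
    proof (cases "(k,j)\<in>E")
      case False
      then have "B = {}" unfolding B_def A_def C_def by auto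
      then show ?thesis using False by simp
    next
      case True
      have "B = (\<lambda>l. (l,k)) ` (?N k - {i,j})"
      proof
        show "B \<subseteq> (\<lambda>l. (l,k)) ` (?N k - {i,j})"
          unfolding B_def A_def C_def by force
        show "(\<lambda>l. (l,k)) ` (?N k - {i,j}) \<subseteq> B"
        proof
          fix q assume "q \<in> (\<lambda>l. (l,k)) ` (?N k - {i,j})"
          then obtain l where q: "q = (l,k)" and l: "l \<in> ?N k" "l \<noteq> i" "l \<noteq> j" by auto
          have "(k,l) \<in> E" "l \<in> ?Vi" using l by (auto simp: Nmem)
          then have "k \<in> ?N l" using sy kV by (auto simp: Nmem)
          then show "q \<in> B" unfolding B_def A_def C_def q using l True ki by auto
        qed
      qed
      then have "card B = card (?N k - {i,j})" by (simp add: card_image inj_on_def)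
      also have "\<dots> = card ((?N k - {i}) - {j})" by (simp only: N2)
      finally have "real (card B) = real (card ((?N k - {i}) - {j}))" by simp
      moreover have "real (card ((?N k - {i}) - {j})) = real (card (?N k)) - of_bool (i \<in> ?N k) - of_bool (j \<in> ?N k)"
      proof -
        have c1: "1 \<le> card (?N k)" if "u \<in> ?N k" for u
          using finN[of k] that card_gt_0_iff[of "?N k"] by auto
        have c2: "2 \<le> card (?N k)" if "i \<in> ?N k" "j \<in> ?N k"
          using card_mono[OF finN[of k], of "{i,j}"] that ijne by simp
        show ?thesis using ijne finN[of k] c1 c2
          by (auto simp: card_Diff_singleton_if of_nat_diff)
      qed
      ultimately show ?thesis using True by simp
    qed
    have "G 4 V E x e i j 3 k = [real (card A) - of_bool ((k,j)\<in>E) *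
        (real (card (?N k)) - of_bool (i \<in> ?N k) - of_bool (j \<in> ?N k))]"
      using ki kj kV by (simp add: h3 SA h1n P3 sind finN)
    then show ?thesis using numP cP cB by simp
  qed
qed

theorem lemma3:
  fixes dx :: nat
  shows "\<exists>(K::nat) (T::nat) (d::nat \<Rightarrow> nat)
            (M::nat \<Rightarrow> real list \<Rightarrow> real list \<Rightarrow> 'e \<Rightarrow> real list)
            (U::nat \<Rightarrow> real list \<Rightarrow> real list \<Rightarrow> real list).
           K \<ge> 1 \<and> (\<forall>t a b w. length (M t a b w) = d t) \<and>
           (\<forall>V E (x::nat \<Rightarrow> real list) (e::nat \<Rightarrow> nat \<Rightarrow> 'e) i j k.
              simple_graph V E \<longrightarrow> (\<forall>v. length (x v) = dx) \<longrightarrow>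
              (\<forall>u v. e u v = e v u) \<longrightarrow>
              i \<in> V \<longrightarrow> j \<in> nbrs E i \<longrightarrow> k \<in> khop V E K i \<longrightarrow>
              i2gnn K d M U V E x e i j T k = [real (num_4paths E i j k)])"
proof (rule exI[where x=4], rule exI[where x=3], rule exI[where x=dd], rule exI[where x=MM],
       rule exI[where x=UU], intro conjI allI impI)
  show "(1::nat) \<le> 4" by simp
  show "length (MM t a b w) = dd t" for t a b w by (rule len_MM)
  fix V E and x :: "nat \<Rightarrow> real list" and e :: "nat \<Rightarrow> nat \<Rightarrow> 'e" and i j k
  assume "simple_graph V E" "i \<in> V" "j \<in> nbrs E i" "k \<in> khop V E 4 i"
  then show "i2gnn 4 dd MM UU V E x e i j 3 k = [real (num_4paths E i j k)]"
    by (intro main) (auto simp: nbrs_def)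
qed

end
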